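(* Consider the (1+1) EA maximizing $\mathrm{OneMax}$ on $\{0,1\}^n$, and let $V_t$ be the $\mathrm{OneMax}$ value (number of $1$s) of its current search point after $t$ iterations. Then, as $n\to\infty$, \[ \mathbb{E}[V_t]\ \ge\ \begin{cases}\dfrac n2+\dfrac{t}{2\sqrt e}-O(1), & \text{if } t=O(\sqrt n),\\[2mm] \dfrac n2+\dfrac{t}{2\sqrt e}(1-o(1)), &\text{if } t=o(n).\end{cases} \] Furthermore, for all $t\ge0$, $\mathbb{E}[V_t]\ge n\bigl(1-\exp(-t/(en))/2\bigr)$.
   Context: $\mathrm{OneMax}(x)=\sum_{i=1}^n x_i$ for $x\in\{0,1\}^n$. The (1+1) EA maximizing $f\colon\{0,1\}^n\to\mathbb{R}$: choose $x\in\{0,1\}^n$ uniformly at random; then repeatedly (one iteration) create $y$ from $x$ by flipping each bit independently with probability $1/n$, and replace $x$ by $y$ if $f(y)\ge f(x)$; the algorithm stops once the optimum is reached (the search point then stays at the optimum). Asymptotic notation refers to $n\to\infty$. *)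

theory Defs
  imports "HOL-Probability.Probability"
begin

text \<open>Bit strings of length n are lists of booleans (True = 1).\<close>

definition onemax :: "bool list \<Rightarrow> nat" where
  "onemax x = length (filter id x)"

fun mutate :: "real \<Rightarrow> bool list \<Rightarrow> bool list pmf" where
  "mutate p [] = return_pmf []"
| "mutate p (b # bs) =
     do { f \<leftarrow> bernoulli_pmf p; bs' \<leftarrow> mutate p bs; return_pmf ((b \<noteq> f) # bs') }"

definition ea_step :: "nat \<Rightarrow> bool list \<Rightarrow> bool list pmf" where
  "ea_step n x =
     (if onemax x = length x then return_pmf x
      else do { y \<leftarrow> mutate (1 / real n) x;
                return_pmf (if onemax y \<ge> onemax x then y else x) })"

fun ea_state :: "nat \<Rightarrow> nat \<Rightarrow> bool list pmf" where
  "ea_state n 0 = pmf_of_set {x. length x = n}"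
| "ea_state n (Suc t) = ea_state n t \<bind> ea_step n"

definition exp_value :: "nat \<Rightarrow> nat \<Rightarrow> real" where
  "exp_value n t = measure_pmf.expectation (ea_state n t) (\<lambda>x. real (onemax x))"

end

theory Submission
  imports Defs
begin

lemma exp_bind:
  fixes h :: "'b \<Rightarrow> real"
  assumes "finite (set_pmf p)" "\<And>x. x \<in> set_pmf p \<Longrightarrow> finite (set_pmf (f x))"
  shows "measure_pmf.expectation (p \<bind> f) h =
         measure_pmf.expectation p (\<lambda>x. measure_pmf.expectation (f x) h)"
  apply (subst pmf_expectation_bind[of "set_pmf p"])
  using assms apply auto[3]
  apply (subst integral_measure_pmf[of "set_pmf p"])
  using assms by auto

lemma exp_mono:
  fixes f g :: "'a \<Rightarrow> real"
  assumes "finite (set_pmf p)" "\<And>x. x \<in> set_pmf p \<Longrightarrow> f x \<le> g x"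
  shows "measure_pmf.expectation p f \<le> measure_pmf.expectation p g"
  apply (subst integral_measure_pmf[of "set_pmf p"], fact, simp)
  apply (subst integral_measure_pmf[of "set_pmf p"], fact, simp)
  using assms by (auto intro!: sum_mono mult_left_mono)

lemma exp_add:
  fixes f g :: "'a \<Rightarrow> real"
  assumes "finite (set_pmf p)"
  shows "measure_pmf.expectation p (\<lambda>x. f x + g x) = measure_pmf.expectation p f + measure_pmf.expectation p g"
  using assms by (simp add: integrable_measure_pmf_finite)

lemma exp_cmult:
  fixes f :: "'a \<Rightarrow> real"
  shows "measure_pmf.expectation p (\<lambda>x. c * f x) = c * measure_pmf.expectation p f"
  by simp

lemma exp_const:
  shows "measure_pmf.expectation p (\<lambda>x. c::real) = c"
  by simp

lemma finite_mutate: "finite (set_pmf (mutate p x))"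
  by (induction x) auto

lemma length_mutate: "y \<in> set_pmf (mutate p x) \<Longrightarrow> length y = length x"
  by (induction x arbitrary: y) auto

fun zf :: "bool list \<Rightarrow> bool list \<Rightarrow> nat" where
  "zf (b # bs) (c # cs) = (if \<not> b \<and> c then 1 else 0) + zf bs cs"
| "zf _ _ = 0"

fun gd :: "bool list \<Rightarrow> bool list \<Rightarrow> bool" where
  "gd (b # bs) (c # cs) = ((b \<longrightarrow> c) \<and> gd bs cs)"
| "gd _ _ = True"

lemma onemax_Cons: "onemax (b # bs) = (if b then 1 else 0) + onemax bs"
  by (simp add: onemax_def)

lemma onemax_le: "onemax x \<le> length x"
  by (simp add: onemax_def)

lemma gd_onemax: "length y = length x \<Longrightarrow> gd x y \<Longrightarrow> onemax y = onemax x + zf x y"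
proof (induction x arbitrary: y)
  case Nil
  then show ?case by (simp add: onemax_def)
next
  case (Cons b bs)
  then obtain c cs where "y = c # cs" by (cases y) auto
  with Cons show ?case by (auto simp: onemax_Cons)
qed

lemma mutate_A:
  assumes "0 \<le> p" "p \<le> 1"
  shows "measure_pmf.expectation (mutate p x) (\<lambda>y. if gd x y then 1 else 0) = (1 - p) ^ onemax x"
proof (induction x)
  case Nil
  then show ?case by (simp add: onemax_def)
next
  case (Cons b bs)
  have e: "measure_pmf.expectation (mutate p (b # bs)) F =
     measure_pmf.expectation (bernoulli_pmf p) (\<lambda>f. measure_pmf.expectation (mutate p bs) (\<lambda>y. F ((b \<noteq> f) # y)))"
    for F :: "bool list \<Rightarrow> real"
    by (simp only: mutate.simps, subst exp_bind, simp, simp add: finite_mutate, subst exp_bind)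
       (auto simp: finite_mutate)
  show ?case
    apply (subst e)
    apply (subst integral_bernoulli_pmf, fact, fact)
    using Cons.IH by (cases b) (auto simp: onemax_Cons algebra_simps)
qed
lemma exp_mutate_Cons:
  "measure_pmf.expectation (mutate p (b # bs)) F =
     measure_pmf.expectation (bernoulli_pmf p) (\<lambda>f. measure_pmf.expectation (mutate p bs) (\<lambda>y. F ((b \<noteq> f) # y)))"
    for F :: "bool list \<Rightarrow> real"
    by (simp only: mutate.simps, subst exp_bind, simp, simp add: finite_mutate, subst exp_bind)
       (auto simp: finite_mutate)

lemma mutate_B:
  assumes "0 \<le> p" "p \<le> 1"
  shows "measure_pmf.expectation (mutate p x) (\<lambda>y. if gd x y then real (zf x y) else 0)
     = real (length x - onemax x) * p * (1 - p) ^ onemax x"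
proof (induction x)
  case Nil
  then show ?case by (simp add: onemax_def)
next
  case (Cons b bs)
  have T: "measure_pmf.expectation (mutate p (True # bs)) (\<lambda>y. if gd (True # bs) y then real (zf (True # bs) y) else 0)
     = real (length (True # bs) - onemax (True # bs)) * p * (1 - p) ^ onemax (True # bs)"
      apply (subst exp_mutate_Cons)
      apply (subst integral_bernoulli_pmf, fact, fact)
      apply (simp only: gd.simps zf.simps simp_thms HOL.not_False_eq_True if_True if_False add_0_left)
      using Cons.IH by (simp add: onemax_Cons algebra_simps)
  have "measure_pmf.expectation (mutate p bs) (\<lambda>y. if gd bs y then real (1 + zf bs y) else 0)
       = measure_pmf.expectation (mutate p bs) (\<lambda>y. (if gd bs y then 1 else 0) + (if gd bs y then real (zf bs y) else 0))"
      by (rule arg_cong[where f="measure_pmf.expectation _"]) auto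
  also have "\<dots> = (1 - p) ^ onemax bs + real (length bs - onemax bs) * p * (1 - p) ^ onemax bs"
      by (subst exp_add) (auto simp: finite_mutate mutate_A[OF assms] Cons.IH)
  finally have h: "measure_pmf.expectation (mutate p bs) (\<lambda>y. if gd bs y then real (1 + zf bs y) else 0)
        = (1 - p) ^ onemax bs + real (length bs - onemax bs) * p * (1 - p) ^ onemax bs" .
  have le: "onemax bs \<le> length bs" by (rule onemax_le)
  have F: "measure_pmf.expectation (mutate p (False # bs)) (\<lambda>y. if gd (False # bs) y then real (zf (False # bs) y) else 0)
     = real (length (False # bs) - onemax (False # bs)) * p * (1 - p) ^ onemax (False # bs)"
      apply (subst exp_mutate_Cons)
      apply (subst integral_bernoulli_pmf, fact, fact)
      apply (simp only: gd.simps zf.simps simp_thms HOL.not_False_eq_True HOL.not_True_eq_False if_True if_False add_0_left)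
      apply (subst h, subst Cons.IH)
      using le by (simp add: onemax_Cons algebra_simps of_nat_diff Suc_diff_le)
  show ?case
  proof (cases b)
    case True
    then have bb: "b = True" by simp
    show ?thesis unfolding bb by (rule T)
  next
    case False
    then have bb: "b = False" by simp
    show ?thesis unfolding bb by (rule F)
  qed
qed

lemma finite_ea_step: "finite (set_pmf (ea_step n x))"
  by (auto simp: ea_step_def finite_mutate)

lemma length_ea_step: "y \<in> set_pmf (ea_step n x) \<Longrightarrow> length y = length x"
  by (auto simp: ea_step_def length_mutate split: if_splits)

lemma progress:
  assumes n: "n \<ge> 1" and len: "length x = n"
  shows "measure_pmf.expectation (ea_step n x) (\<lambda>y. real (onemax y)) \<ge>
     real (onemax x) + real (n - onemax x) * (1 / real n) * (1 - 1 / real n) ^ onemax x"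
proof (cases "onemax x = length x")
  case True
  then show ?thesis using len by (simp add: ea_step_def)
next
  case False
  define p where "p = 1 / real n"
  have p01: "0 \<le> p" "p \<le> 1" using n by (auto simp: p_def)
  define sel where "sel y = (if onemax y \<ge> onemax x then y else x)" for y
  have "ea_step n x = mutate p x \<bind> (\<lambda>y. return_pmf (sel y))"
    using False by (simp add: ea_step_def p_def sel_def)
  then have "measure_pmf.expectation (ea_step n x) (\<lambda>y. real (onemax y))
      = measure_pmf.expectation (mutate p x) (\<lambda>y. real (onemax (sel y)))"
    by (simp add: exp_bind finite_mutate)
  also have "\<dots> \<ge> measure_pmf.expectation (mutate p x) (\<lambda>y. real (onemax x) + (if gd x y then real (zf x y) else 0))"
  proof (rule exp_mono[OF finite_mutate])
    fix y assume "y \<in> set_pmf (mutate p x)"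
    then have ly: "length y = length x" by (rule length_mutate)
    show "real (onemax x) + (if gd x y then real (zf x y) else 0) \<le> real (onemax (sel y))"
    proof (cases "gd x y")
      case True
      then have "onemax y = onemax x + zf x y" using gd_onemax ly by blast
      then show ?thesis using True by (simp add: sel_def)
    next
      case False
      then show ?thesis by (simp add: sel_def)
    qed
  qed
  also have "measure_pmf.expectation (mutate p x) (\<lambda>y. real (onemax x) + (if gd x y then real (zf x y) else 0))
     = real (onemax x) + real (length x - onemax x) * p * (1 - p) ^ onemax x"
    by (subst exp_add[OF finite_mutate]) (simp add: mutate_B[OF p01])
  finally show ?thesis using len by (simp add: p_def)
qed

lemma S_finite: "finite {x::bool list. length x = n}"
  using finite_lists_length_eq[of "UNIV::bool set" n] by simp

lemma S_nonempty: "{x::bool list. length x = n} \<noteq> {}"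
  by (auto intro!: exI[of _ "replicate n False"])

lemma state_props: "finite (set_pmf (ea_state n t)) \<and> (\<forall>x\<in>set_pmf (ea_state n t). length x = n)"
proof (induction t)
  case 0
  then show ?case using S_finite S_nonempty by (simp add: set_pmf_of_set)
next
  case (Suc t)
  then show ?case by (auto simp: finite_ea_step length_ea_step)
qed

lemma onemax_not: "onemax (map Not x) = length x - onemax x"
proof -
  have "length (filter id x) + length (filter (\<lambda>b. \<not> id b) x) = length x"
    by (rule sum_length_filter_compl)
  then show ?thesis by (simp add: onemax_def filter_map comp_def)
qed

lemma exp_value_0: "exp_value n 0 = real n / 2"
proof -
  let ?S = "{x::bool list. length x = n}"
  have b: "bij_betw (map Not) ?S ?S"
    by (rule bij_betwI[where g="map Not"]) (auto simp: comp_def)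
  have "(\<Sum>x\<in>?S. real (onemax x)) = (\<Sum>x\<in>?S. real (onemax (map Not x)))"
    using sum.reindex_bij_betw[OF b, of "\<lambda>x. real (onemax x)"] by simp
  also have "\<dots> = (\<Sum>x\<in>?S. real n - real (onemax x))"
    by (intro sum.cong refl) (auto simp: onemax_not of_nat_diff onemax_le)
  finally have "2 * (\<Sum>x\<in>?S. real (onemax x)) = real n * card ?S"
    by (simp add: sum_subtractf)
  moreover have "card ?S > 0" using S_finite S_nonempty by (simp add: card_gt_0_iff)
  ultimately show ?thesis
    unfolding exp_value_def ea_state.simps
    by (subst integral_pmf_of_set[OF S_nonempty S_finite]) (simp add: field_simps)
qed

lemma step_lin:
  assumes n: "n \<ge> 1"
    and h: "\<And>v. v \<le> n \<Longrightarrow> real (n - v) * (1 / real n) * (1 - 1 / real n) ^ v \<ge> \<alpha> + \<beta> * real v"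
  shows "exp_value n (Suc t) \<ge> (1 + \<beta>) * exp_value n t + \<alpha>"
proof -
  have fin: "finite (set_pmf (ea_state n t))" and len: "\<And>x. x \<in> set_pmf (ea_state n t) \<Longrightarrow> length x = n"
    using state_props by blast+
  have "exp_value n (Suc t) = measure_pmf.expectation (ea_state n t)
         (\<lambda>x. measure_pmf.expectation (ea_step n x) (\<lambda>y. real (onemax y)))"
    unfolding exp_value_def ea_state.simps using fin by (simp add: exp_bind finite_ea_step)
  also have "\<dots> \<ge> measure_pmf.expectation (ea_state n t) (\<lambda>x. (1 + \<beta>) * real (onemax x) + \<alpha>)"
  proof (rule exp_mono[OF fin])
    fix x assume x: "x \<in> set_pmf (ea_state n t)"
    have "onemax x \<le> n" using onemax_le len[OF x] by metis
    from h[OF this] progress[OF n len[OF x]]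
    show "(1 + \<beta>) * real (onemax x) + \<alpha> \<le> measure_pmf.expectation (ea_step n x) (\<lambda>y. real (onemax y))"
      by (simp add: algebra_simps)
  qed
  also have "measure_pmf.expectation (ea_state n t) (\<lambda>x. (1 + \<beta>) * real (onemax x) + \<alpha>)
      = (1 + \<beta>) * exp_value n t + \<alpha>"
    unfolding exp_value_def by (subst exp_add[OF fin]) simp
  finally show ?thesis .
qed

lemma ln_q_lower:
  assumes "n \<ge> 2"
  shows "ln (1 - 1 / real n) \<ge> - 1 / (real n - 1)"
proof -
  have n: "real n \<ge> 2" using assms by simp
  have q: "1 - 1 / real n = (real n - 1) / real n" using n by (simp add: field_simps)
  have "ln (real n / (real n - 1)) \<le> real n / (real n - 1) - 1"
    using n by (intro ln_le_minus_one) auto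
  also have "\<dots> = 1 / (real n - 1)" using n by (simp add: field_simps)
  finally have "ln (real n / (real n - 1)) \<le> 1 / (real n - 1)" .
  moreover have "ln (real n / (real n - 1)) = - ln ((real n - 1) / real n)"
    using n by (simp add: ln_div)
  ultimately show ?thesis unfolding q by simp
qed

lemma q_pow_lower:
  assumes "n \<ge> 1"
  shows "(1 - 1 / real n) ^ (n - 1) \<ge> exp (-1)"
proof (cases "n = 1")
  case True
  then show ?thesis by simp
next
  case False
  then have n2: "n \<ge> 2" using assms by simp
  have qpos: "1 - 1 / real n > 0" using n2 by (simp add: field_simps)
  have "(1 - 1 / real n) ^ (n - 1) = exp (real (n - 1) * ln (1 - 1 / real n))"
    using qpos by (simp add: exp_of_nat_mult)
  moreover have "real (n - 1) * ln (1 - 1 / real n) \<ge> -1"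
  proof -
    have "real (n - 1) * ln (1 - 1 / real n) \<ge> real (n - 1) * (- 1 / (real n - 1))"
      using ln_q_lower[OF n2] by (intro mult_left_mono) auto
    also have "real (n - 1) * (- 1 / (real n - 1)) = -1" using n2 by (simp add: of_nat_diff)
    finally show ?thesis by simp
  qed
  ultimately show ?thesis by simp
qed

lemma h_bound3:
  assumes n: "n \<ge> 1" and v: "v \<le> n"
  shows "real (n - v) * (1 / real n) * (1 - 1 / real n) ^ v \<ge> 1 / exp 1 + (- 1 / (exp 1 * real n)) * real v"
proof (cases "v = n")
  case True
  then show ?thesis using n by (simp add: field_simps)
next
  case False
  then have v1: "v \<le> n - 1" using v by simp
  have q01: "0 \<le> 1 - 1 / real n" "1 - 1 / real n \<le> 1" using n by (auto simp: field_simps)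
  have "(1 - 1 / real n) ^ v \<ge> (1 - 1 / real n) ^ (n - 1)"
    by (rule power_decreasing[OF v1 q01])
  moreover have "exp (-1) = 1 / exp (1::real)" by (simp add: exp_minus inverse_eq_divide)
  ultimately have qv: "(1 - 1 / real n) ^ v \<ge> 1 / exp 1" using q_pow_lower[OF n] by linarith
  have r: "real (n - v) * (1 / real n) \<ge> 0" by simp
  have "real (n - v) * (1 / real n) * (1 - 1 / real n) ^ v \<ge> real (n - v) * (1 / real n) * (1 / exp 1)"
    using mult_left_mono[OF qv r] .
  also have "real (n - v) * (1 / real n) * (1 / exp 1) = 1 / exp 1 + (- 1 / (exp 1 * real n)) * real v"
    using n v by (simp add: of_nat_diff field_simps)
  finally show ?thesis by simp
qed

lemma part3:
  assumes n: "n \<ge> 1"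
  shows "exp_value n t \<ge> real n * (1 - exp (- real t / (exp 1 * real n)) / 2)"
proof -
  define a where "a = 1 / (exp 1 * real n)"
  have npos: "real n > 0" using n by simp
  have a0: "a \<ge> 0" using npos by (simp add: a_def)
  have "exp 1 * real n \<ge> 1 * 1" using n by (intro mult_mono) (auto simp: one_le_exp_iff)
  then have a1: "a \<le> 1" unfolding a_def by simp
  have an: "a * real n = 1 / exp 1" using npos by (simp add: a_def)
  have rec: "exp_value n (Suc t) \<ge> (1 - a) * exp_value n t + a * real n" for t
    using step_lin[OF n h_bound3[OF n], of t] n by (simp add: an a_def)
  have W: "real n - exp_value n t \<le> real n / 2 * (1 - a) ^ t" for t
  proof (induction t)
    case 0
    then show ?case by (simp add: exp_value_0)
  next
    case (Suc t)
    have "real n - exp_value n (Suc t) \<le> (1 - a) * (real n - exp_value n t)"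
      using rec[of t] by (simp add: algebra_simps)
    also have "\<dots> \<le> (1 - a) * (real n / 2 * (1 - a) ^ t)"
      using Suc a1 by (intro mult_left_mono) auto
    finally show ?case by (simp add: algebra_simps)
  qed
  have "(1 - a) ^ t \<le> exp (- a) ^ t"
    using a1 by (intro power_mono) (auto simp: exp_ge_add_one_self[of "-a", simplified])
  also have "exp (- a) ^ t = exp (- real t / (exp 1 * real n))"
    by (simp add: exp_of_nat_mult[symmetric] a_def)
  finally have "real n / 2 * (1 - a) ^ t \<le> real n / 2 * exp (- real t / (exp 1 * real n))"
    by (intro mult_left_mono) auto
  with W[of t] show ?thesis by (simp add: algebra_simps)
qed

lemma h_bound12:
  fixes n v :: nat
  assumes n: "n \<ge> 2" and v: "v \<le> n"
  defines "q \<equiv> 1 - 1 / real n"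
  defines "c \<equiv> q powr (real n / 2)"
  defines "K \<equiv> 1 / real n - ln q / 2"
  shows "real (n - v) * (1 / real n) * q ^ v \<ge> (c / 2 + c * K * real n / 2) + (- c * K) * real v"
proof -
  have npos: "real n \<ge> 2" using n by simp
  have qpos: "q > 0" using npos by (simp add: q_def field_simps)
  have q1: "q \<le> 1" using npos by (simp add: q_def)
  have L: "ln q \<le> 0" using qpos q1 by simp
  define d where "d = real v - real n / 2"
  have "q ^ v = q powr real v" using qpos by (simp add: powr_realpow)
  also have "\<dots> = c * q powr d" unfolding c_def d_def by (simp add: powr_add[symmetric])
  also have "q powr d = exp (d * ln q)" using qpos by (simp add: powr_def mult.commute)
  finally have qv: "q ^ v = c * exp (d * ln q)" .
  have c0: "c \<ge> 0" unfolding c_def by simp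
  define r where "r = real (n - v) * (1 / real n)"
  have r0: "r \<ge> 0" unfolding r_def by simp
  have rd: "r = 1/2 - d / real n" using v npos by (simp add: r_def d_def of_nat_diff field_simps)
  have "r * q ^ v \<ge> r * (c * (1 + d * ln q))"
    unfolding qv using r0 c0 by (intro mult_left_mono) (auto simp: exp_ge_add_one_self)
  moreover have "r * (c * (1 + d * ln q)) - ((c / 2 + c * K * real n / 2) + (- c * K) * real v)
      = c * (- d * d * ln q / real n)"
    unfolding rd K_def d_def using npos by (simp add: field_simps) (simp add: algebra_simps)?
  moreover have "c * (- d * d * ln q / real n) \<ge> 0"
  proof -
    have "- d * d * ln q = (d * d) * (- ln q)" by simp
    also have "\<dots> \<ge> 0" using L by (intro mult_nonneg_nonneg[of "d*d"]) auto
    finally have "- d * d * ln q \<ge> 0" .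
    then have "- d * d * ln q / real n \<ge> 0" using npos by (intro divide_nonneg_pos) auto
    then show ?thesis by (rule mult_nonneg_nonneg[OF c0])
  qed
  ultimately show ?thesis unfolding r_def by linarith
qed

lemma part12:
  assumes n: "n \<ge> 2"
  shows "exp_value n t \<ge> real n / 2 + real t / (2 * sqrt (exp 1)) * (1 - (1 / real n + 2 * real t / real n))"
proof -
  define q where "q = 1 - 1 / real n"
  define c where "c = q powr (real n / 2)"
  define K where "K = 1 / real n - ln q / 2"
  define a where "a = c * K"
  have npos: "real n \<ge> 2" using n by simp
  have qpos: "q > 0" using npos by (simp add: q_def field_simps)
  have q1: "q \<le> 1" using npos by (simp add: q_def)
  have L: "ln q \<le> 0" using qpos q1 by simp
  have L2: "- ln q \<le> 1 / (real n - 1)" using ln_q_lower[OF n] by (simp add: q_def)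
  have c0: "c \<ge> 0" unfolding c_def by simp
  have c1: "c \<le> 1"
  proof -
    have "c \<le> 1 powr (real n / 2)" unfolding c_def using qpos q1 by (intro powr_mono2) auto
    then show ?thesis by simp
  qed
  have ni: "1 / real n > 0" using npos by simp
  have K0: "K \<ge> 0" unfolding K_def using L ni by linarith
  have K2: "K \<le> 2 / real n"
  proof -
    have e: "1 / (2 * (real n - 1)) = (1 / (real n - 1)) / 2" by simp
    have gen: "- l \<le> A \<Longrightarrow> B - l / 2 \<le> B + A / 2" for l A B :: real by simp
    have "K \<le> 1 / real n + 1 / (2 * (real n - 1))" unfolding K_def e by (rule gen[OF L2])
    also have "1 / (2 * (real n - 1)) \<le> 1 / real n" using npos by (simp add: field_simps)
    finally show ?thesis by simp
  qed
  have a0: "a \<ge> 0" using c0 K0 by (simp add: a_def)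
  have a2: "a \<le> 2 / real n"
  proof -
    have "a \<le> 1 * K" unfolding a_def using c1 K0 by (intro mult_right_mono) auto
    then show ?thesis using K2 by simp
  qed
  have a1: "a \<le> 1"
  proof -
    have "2 / real n \<le> 1" using npos by simp
    then show ?thesis using a2 by linarith
  qed
  have csq: "c * c = q ^ n"
  proof -
    have "c * c = q powr (real n / 2 + real n / 2)" unfolding c_def by (simp only: powr_add)
    also have "\<dots> = q powr real n" by simp
    also have "\<dots> = q ^ n" using qpos by (simp add: powr_realpow)
    finally show ?thesis .
  qed
  have qn: "q ^ n \<ge> q * exp (-1)"
  proof -
    have "q ^ n = q * q ^ (n - 1)" using n by (simp add: power_eq_if)
    moreover have "q ^ (n - 1) \<ge> exp (-1)" using q_pow_lower[of n] n by (simp add: q_def)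
    ultimately show ?thesis using qpos by simp
  qed
  have em: "exp (-1) = 1 / exp (1::real)" by (simp add: exp_minus inverse_eq_divide)
  have cq: "c \<ge> q / sqrt (exp 1)"
  proof (rule power2_le_imp_le)
    have "(q / sqrt (exp 1))\<^sup>2 = q * q / exp 1" by (simp add: power2_eq_square)
    also have "\<dots> \<le> q / exp 1" using qpos q1 by (simp add: divide_right_mono mult_left_le)
    also have "\<dots> \<le> c\<^sup>2" using qn csq em by (simp add: power2_eq_square)
    finally show "(q / sqrt (exp 1))\<^sup>2 \<le> c\<^sup>2" .
  qed (rule c0)
  have rec: "exp_value n (Suc s) - real n / 2 \<ge> (1 - a) * (exp_value n s - real n / 2) + c / 2" for s
  proof -
    have "exp_value n (Suc s) \<ge> (1 + - c * K) * exp_value n s + (c / 2 + c * K * real n / 2)"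
    proof (rule step_lin)
      fix v assume "v \<le> n"
      from h_bound12[OF n this]
      show "real (n - v) * (1 / real n) * (1 - 1 / real n) ^ v \<ge> (c / 2 + c * K * real n / 2) + (- c * K) * real v"
        unfolding q_def c_def K_def .
    qed (use n in simp)
    then show ?thesis unfolding a_def by (simp add: algebra_simps diff_divide_distrib)
  qed
  have D: "exp_value n s - real n / 2 \<ge> 0 \<and> exp_value n s - real n / 2 \<ge> c / 2 * (real s - real s ^ 2 * a)" for s
  proof (induction s)
    case 0
    then show ?case by (simp add: exp_value_0)
  next
    case (Suc s)
    define D where "D = exp_value n s - real n / 2"
    have D0: "D \<ge> 0" and Dl: "D \<ge> c / 2 * (real s - real s ^ 2 * a)" using Suc by (auto simp: D_def)
    have r: "exp_value n (Suc s) - real n / 2 \<ge> (1 - a) * D + c / 2" using rec[of s] by (simp add: D_def)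
    have "(1 - a) * D \<ge> 0" using D0 a1 by simp
    moreover have "(1 - a) * D \<ge> (1 - a) * (c / 2 * (real s - real s ^ 2 * a))"
      using Dl a1 by (intro mult_left_mono) auto
    moreover have "(1 - a) * (c / 2 * (real s - real s ^ 2 * a)) + c / 2 - c / 2 * (real (Suc s) - real (Suc s) ^ 2 * a)
        = c / 2 * (a * real s + a + real s ^ 2 * a ^ 2)"
      by (simp add: field_simps power2_eq_square)
    moreover have "c / 2 * (a * real s + a + real s ^ 2 * a ^ 2) \<ge> 0"
      using c0 a0 by simp
    ultimately show ?case using r c0 by linarith
  qed
  define T where "T = real t"
  have T0: "T \<ge> 0" by (simp add: T_def)
  have se: "sqrt (exp 1) > 0" by simp
  show ?thesis
  proof (cases "2 * T \<le> real n")
    case False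
    then have "1 - (1 / real n + 2 * T / real n) \<le> 0" using npos by (simp add: field_simps)
    then have "T / (2 * sqrt (exp 1)) * (1 - (1 / real n + 2 * T / real n)) \<le> 0"
      using T0 se by (intro mult_nonneg_nonpos) auto
    then show ?thesis using D[of t] by (simp add: T_def)
  next
    case True
    have f: "1 - 2 * T / real n \<ge> 0" using True npos by (simp add: field_simps)
    have "c / 2 * (T - T ^ 2 * a) \<ge> c / 2 * (T - T ^ 2 * (2 / real n))"
    proof (rule mult_left_mono)
      have "T ^ 2 * a \<le> T ^ 2 * (2 / real n)" using a2 by (intro mult_left_mono) auto
      then show "T - T ^ 2 * (2 / real n) \<le> T - T ^ 2 * a" by linarith
    qed (use c0 in simp)
    also have "c / 2 * (T - T ^ 2 * (2 / real n)) = c * (T / 2 * (1 - 2 * T / real n))"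
      by (simp add: power2_eq_square field_simps)
    also have "\<dots> \<ge> q / sqrt (exp 1) * (T / 2 * (1 - 2 * T / real n))"
      using cq f T0 by (intro mult_right_mono) auto
    also have "q / sqrt (exp 1) * (T / 2 * (1 - 2 * T / real n))
        = T / (2 * sqrt (exp 1)) * ((1 - 1 / real n) * (1 - 2 * T / real n))"
      by (simp add: q_def field_simps)
    also have "\<dots> \<ge> T / (2 * sqrt (exp 1)) * (1 - (1 / real n + 2 * T / real n))"
    proof (intro mult_left_mono)
      have "(1 / real n) * (2 * T / real n) \<ge> 0" using T0 by simp
      moreover have gen: "x * y \<ge> 0 \<Longrightarrow> 1 - (x + y) \<le> (1 - x) * (1 - y)" for x y :: real
        by (simp add: algebra_simps)
      ultimately show "1 - (1 / real n + 2 * T / real n) \<le> (1 - 1 / real n) * (1 - 2 * T / real n)"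
        by blast
    qed (use T0 in simp)
    finally have X: "T / (2 * sqrt (exp 1)) * (1 - (1 / real n + 2 * T / real n)) \<le> c / 2 * (T - T\<^sup>2 * a)" .
    show ?thesis using X D[of t] unfolding T_def by linarith
  qed
qed

lemma deficit_bound:
  fixes T c :: real
  assumes n: "n \<ge> 2" and T0: "T \<ge> 0" and c0: "c \<ge> 0" and Tc: "T \<le> c * sqrt (real n)"
  shows "T / (2 * sqrt (exp 1)) * (1 / real n + 2 * T / real n) \<le> c + c ^ 2"
proof -
  have npos: "real n \<ge> 2" using n by simp
  have s1: "sqrt (exp 1) \<ge> 1" by simp
  have A: "T / (2 * sqrt (exp 1)) \<le> T / 2"
    using s1 T0 by (intro divide_left_mono) auto
  have B: "1 / real n + 2 * T / real n \<ge> 0" using T0 npos by simp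
  have "T / (2 * sqrt (exp 1)) * (1 / real n + 2 * T / real n) \<le> T / 2 * (1 / real n + 2 * T / real n)"
    using mult_right_mono[OF A B] .
  also have "\<dots> = T / (2 * real n) + T ^ 2 / real n" using npos by (simp add: field_simps power2_eq_square)
  also have "T / (2 * real n) \<le> c"
  proof -
    have sn: "sqrt (real n) \<le> real n"
    proof -
      have s1: "sqrt (real n) \<ge> 1" using npos by simp
      have "sqrt (real n) * 1 \<le> sqrt (real n) * sqrt (real n)"
        using s1 by (intro mult_left_mono) auto
      also have "\<dots> = real n" by simp
      finally show ?thesis by simp
    qed
    have "T \<le> c * real n" using Tc mult_left_mono[OF sn c0] by linarith
    then have "T / real n \<le> c" using npos by (simp add: field_simps)
    moreover have "T / (2 * real n) \<le> T / real n" using T0 npos by (simp add: field_simps)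
    ultimately show ?thesis by linarith
  qed
  also have "T ^ 2 / real n \<le> c ^ 2"
  proof -
    have "T ^ 2 \<le> (c * sqrt (real n)) ^ 2" using Tc T0 by (intro power_mono) auto
    also have "\<dots> = c ^ 2 * real n" by (simp add: power_mult_distrib)
    finally show ?thesis using npos by (simp add: field_simps)
  qed
  finally show ?thesis by simp
qed

theorem theorem7:
  shows "(\<forall>t :: nat \<Rightarrow> nat. (\<lambda>n. real (t n)) \<in> O(\<lambda>n. sqrt (real n)) \<longrightarrow>
            (\<exists>C. \<forall>\<^sub>F n in at_top.
               exp_value n (t n) \<ge> real n / 2 + real (t n) / (2 * sqrt (exp 1)) - C))
     \<and> (\<forall>t :: nat \<Rightarrow> nat. (\<lambda>n. real (t n)) \<in> o(\<lambda>n. real n) \<longrightarrow>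
            (\<exists>g :: nat \<Rightarrow> real. (g \<longlongrightarrow> 0) at_top \<and> (\<forall>\<^sub>F n in at_top.
               exp_value n (t n) \<ge> real n / 2 + real (t n) / (2 * sqrt (exp 1)) * (1 - g n))))
     \<and> (\<forall>n t. n \<ge> 1 \<longrightarrow>
            exp_value n t \<ge> real n * (1 - exp (- real t / (exp 1 * real n)) / 2))"
proof (intro conjI allI impI)
  fix t :: "nat \<Rightarrow> nat"
  assume "(\<lambda>n. real (t n)) \<in> O(\<lambda>n. sqrt (real n))"
  then obtain c where c: "c > 0" and ev: "\<forall>\<^sub>F n in at_top. norm (real (t n)) \<le> c * norm (sqrt (real n))"
    by (elim landau_o.bigE)
  show "\<exists>C. \<forall>\<^sub>F n in at_top.
               exp_value n (t n) \<ge> real n / 2 + real (t n) / (2 * sqrt (exp 1)) - C"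
  proof (intro exI[of _ "c + c ^ 2"])
    show "\<forall>\<^sub>F n in at_top. exp_value n (t n) \<ge> real n / 2 + real (t n) / (2 * sqrt (exp 1)) - (c + c ^ 2)"
      using ev eventually_ge_at_top[of "2::nat"]
    proof eventually_elim
      case (elim n)
      have Tc: "real (t n) \<le> c * sqrt (real n)" using elim(1) by simp
      have d: "real (t n) / (2 * sqrt (exp 1)) * (1 / real n + 2 * real (t n) / real n) \<le> c + c ^ 2"
        by (rule deficit_bound[OF elim(2) _ _ Tc]) (use c in auto)
      have "exp_value n (t n) \<ge> real n / 2 + real (t n) / (2 * sqrt (exp 1)) * (1 - (1 / real n + 2 * real (t n) / real n))"
        by (rule part12[OF elim(2)])
      then show ?case using d by (simp add: algebra_simps)
    qed
  qed
next
  fix t :: "nat \<Rightarrow> nat"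
  assume o: "(\<lambda>n. real (t n)) \<in> o(\<lambda>n. real n)"
  define g where "g n = 1 / real n + 2 * real (t n) / real n" for n
  show "\<exists>g :: nat \<Rightarrow> real. (g \<longlongrightarrow> 0) at_top \<and> (\<forall>\<^sub>F n in at_top.
               exp_value n (t n) \<ge> real n / 2 + real (t n) / (2 * sqrt (exp 1)) * (1 - g n))"
  proof (intro exI[of _ g] conjI)
    have l1: "(\<lambda>n. 1 / real n) \<longlonglongrightarrow> 0" by (rule lim_1_over_n)
    have l2: "(\<lambda>n. real (t n) / real n) \<longlonglongrightarrow> 0" using smalloD_tendsto[OF o] by simp
    have "(\<lambda>n. 1 / real n + 2 * (real (t n) / real n)) \<longlonglongrightarrow> 0 + 2 * 0"
      by (intro tendsto_intros l1 l2)
    moreover have "g = (\<lambda>n. 1 / real n + 2 * (real (t n) / real n))" by (rule ext) (simp add: g_def)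
    ultimately show "(g \<longlongrightarrow> 0) at_top" by simp
    show "\<forall>\<^sub>F n in at_top. exp_value n (t n) \<ge> real n / 2 + real (t n) / (2 * sqrt (exp 1)) * (1 - g n)"
      using eventually_ge_at_top[of "2::nat"]
    proof eventually_elim
      case (elim n)
      show ?case unfolding g_def by (rule part12[OF elim])
    qed
  qed
next
  fix n t :: nat
  assume "n \<ge> 1"
  then show "exp_value n t \<ge> real n * (1 - exp (- real t / (exp 1 * real n)) / 2)"
    by (rule part3)
qed

end
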